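(* Let $A(z)=|z|^2I_d-z\otimes z$ on $\mathbb{R}^d$ and let $u$ be a probability distribution on $\mathbb{R}^d$ with finite second moment which is not concentrated on a line. Set $2E=\int|x|^2\,\mathrm{d}u(x)$ and $V=\int x\,\mathrm{d}u(x)$. Then there exists $\varepsilon>0$ such that for all $x\in\mathbb{R}^d$, $$\varepsilon\le \|A*u(x)\|_2\le 2E+|x-V|^2,$$ and $\varepsilon$ can be taken to be $\varepsilon=\operatorname{tr}(\mathrm{cov}(u))-\|\mathrm{cov}(u)\|_2$. In particular these bounds hold for any continuous probability density $u$ with finite second moment.
   Context: $\|\cdot\|_2$ denotes the matrix 2-norm (spectral norm); $(A*u)(x)=\int A(x-y)\,\mathrm{d}u(y)$ entrywise; $\mathrm{cov}(u)$ is the covariance matrix of $u$. *)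

theory Defs
  imports "HOL-Analysis.Analysis" "HOL-Probability.Probability"
begin

definition outer :: "real^'d \<Rightarrow> real^'d \<Rightarrow> real^'d^'d" where
  "outer z w = (\<chi> i j. z $ i * w $ j)"

definition Amat :: "real^'d \<Rightarrow> real^'d^'d" where
  "Amat z = (norm z)\<^sup>2 *\<^sub>R mat 1 - outer z z"

definition norm2 :: "real^'d^'d \<Rightarrow> real" where
  "norm2 M = onorm (\<lambda>v. M *v v)"

definition convA :: "(real^'d) measure \<Rightarrow> real^'d \<Rightarrow> real^'d^'d" where
  "convA u x = (\<integral>y. Amat (x - y) \<partial>u)"

definition mean :: "(real^'d) measure \<Rightarrow> real^'d" where
  "mean u = (\<integral>y. y \<partial>u)"

definition cov :: "(real^'d) measure \<Rightarrow> real^'d^'d" where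
  "cov u = (\<integral>y. outer (y - mean u) (y - mean u) \<partial>u)"

text \<open>u is concentrated on a line: some affine line (possibly degenerate to a point) has full mass.\<close>
definition concentrated_on_line :: "(real^'d) measure \<Rightarrow> bool" where
  "concentrated_on_line u \<longleftrightarrow> (\<exists>a b. measure u (range (\<lambda>t::real. a + t *\<^sub>R b)) = 1)"

end

theory Submission
  imports Defs
begin


lemma outer_mult: "outer a b *v w = (b \<bullet> w) *\<^sub>R a"
  by (simp add: vec_eq_iff outer_def matrix_vector_mult_def inner_vec_def sum_distrib_left sum_distrib_right mult_ac)

lemma inner_outer: "v \<bullet> (outer a b *v w) = (v \<bullet> a) * (b \<bullet> w)"
  by (simp add: outer_mult)

lemma scaleR_mat_mult: "((c::real) *\<^sub>R (M::real^'n^'m)) *v w = c *\<^sub>R (M *v w)"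
  by (simp add: vec_eq_iff matrix_vector_mult_def sum_distrib_left mult_ac)

lemma inner_Amat: "v \<bullet> (Amat z *v w) = (norm z)\<^sup>2 * (v \<bullet> w) - (v \<bullet> z) * (z \<bullet> w)"
  by (simp add: Amat_def matrix_vector_mult_diff_rdistrib inner_outer inner_diff_right
       scaleR_mat_mult)

lemma bl_form: "bounded_linear (\<lambda>M::real^'n^'n. v \<bullet> (M *v w))"
proof -
  have "linear (\<lambda>M::real^'n^'n. v \<bullet> (M *v w))"
    by (rule linearI) (simp_all add: matrix_vector_mult_add_rdistrib inner_add_right
        matrix_vector_mult_def inner_vec_def sum_distrib_left sum_distrib_right mult_ac distrib_left sum.distrib)
  then show ?thesis by (simp add: linear_conv_bounded_linear)
qed

lemma onorm_lower:
  fixes M :: "real^'n^'n"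
  assumes "norm e = 1"
  shows "e \<bullet> (M *v e) \<le> norm2 M"
proof -
  have "e \<bullet> (M *v e) \<le> norm e * norm (M *v e)" by (rule norm_cauchy_schwarz)
  also have "\<dots> = norm (M *v e)" using assms by simp
  also have "\<dots> \<le> onorm (\<lambda>v. M *v v) * norm e"
    by (rule onorm) simp
  finally show ?thesis using assms by (simp add: norm2_def)
qed

lemma psd_cs:
  fixes M :: "real^'n^'n"
  assumes sym: "\<And>v w. v \<bullet> (M *v w) = w \<bullet> (M *v v)"
    and psd: "\<And>v. 0 \<le> v \<bullet> (M *v v)"
  shows "(a \<bullet> (M *v b))\<^sup>2 \<le> (a \<bullet> (M *v a)) * (b \<bullet> (M *v b))"
proof -
  define p where "p = a \<bullet> (M *v a)"
  define q where "q = b \<bullet> (M *v b)"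
  define r where "r = a \<bullet> (M *v b)"
  have expand: "(a + t *\<^sub>R b) \<bullet> (M *v (a + t *\<^sub>R b)) = p + 2 * t * r + t\<^sup>2 * q" for t
  proof -
    have "(a + t *\<^sub>R b) \<bullet> (M *v (a + t *\<^sub>R b)) =
        a \<bullet> (M *v a) + t * (a \<bullet> (M *v b)) + t * (b \<bullet> (M *v a)) + t * t * (b \<bullet> (M *v b))"
      by (simp add: matrix_vector_right_distrib matrix_vector_mult_scaleR inner_add_left inner_add_right algebra_simps)
    also have "b \<bullet> (M *v a) = r" using sym r_def by metis
    finally show ?thesis by (simp add: p_def q_def r_def power2_eq_square algebra_simps)
  qed
  have nn: "0 \<le> p + 2 * t * r + t\<^sup>2 * q" for t using psd[of "a + t *\<^sub>R b"] expand by simp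
  show ?thesis
  proof (cases "q = 0")
    case True
    have "r = 0"
    proof (rule ccontr)
      assume "r \<noteq> 0"
      have "0 \<le> p + 2 * (- (p + 1) / (2 * r)) * r" using nn[of "- (p + 1) / (2*r)"] True by simp
      also have "\<dots> = -1" using \<open>r \<noteq> 0\<close> by (simp add: field_simps)
      finally show False by simp
    qed
    then show ?thesis by (simp add: r_def p_def q_def True[unfolded q_def])
  next
    case False
    then have qpos: "q > 0" using psd q_def by (metis less_eq_real_def)
    have "0 \<le> p + 2 * (- r / q) * r + (- r / q)\<^sup>2 * q" by (rule nn)
    also have "\<dots> = p - r\<^sup>2 / q" using qpos by (simp add: field_simps power2_eq_square)
    finally have "r\<^sup>2 / q \<le> p" by simp
    then have "r\<^sup>2 \<le> p * q" using qpos by (simp add: field_simps)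
    then show ?thesis by (simp add: p_def q_def r_def)
  qed
qed

lemma sq_aux: "(l * (a::real)\<^sup>2) * (l * b\<^sup>2) = (l*a*b)\<^sup>2"
  by (simp add: power_mult_distrib flip: power2_eq_square)

lemma sq_aux2:
  fixes a l b :: real
  assumes "0 \<le> a" "0 \<le> l" "0 \<le> b" "(a\<^sup>2)\<^sup>2 \<le> (l*a*b)\<^sup>2"
  shows "a \<le> l * b"
proof -
  have "0 \<le> l*a*b" using assms by simp
  then have "a\<^sup>2 \<le> l*a*b" using assms(4) by (rule power2_le_imp_le[rotated])
  then have "a * a \<le> (l * b) * a" by (simp only: power2_eq_square mult.commute mult.left_commute)
  show ?thesis
  proof (cases "a = 0")
    case True then show ?thesis using assms by simp
  next
    case False
    then have "a > 0" using assms by simp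
    then show ?thesis using \<open>a * a \<le> (l * b) * a\<close> by simp
  qed
qed

lemma onorm_upper:
  fixes M :: "real^'n^'n"
  assumes sym: "\<And>v w. v \<bullet> (M *v w) = w \<bullet> (M *v v)"
    and psd: "\<And>v. 0 \<le> v \<bullet> (M *v v)"
    and up: "\<And>v. v \<bullet> (M *v v) \<le> l * (norm v)\<^sup>2"
    and l: "0 \<le> l"
  shows "norm2 M \<le> l"
  unfolding norm2_def
proof (rule onorm_le)
  fix v
  let ?w = "M *v v"
  have eq: "?w \<bullet> (M *v v) = (norm ?w)\<^sup>2" by (simp add: power2_norm_eq_inner)
  have "(?w \<bullet> (M *v v))\<^sup>2 \<le> (?w \<bullet> (M *v ?w)) * (v \<bullet> (M *v v))" by (rule psd_cs[OF sym psd])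
  also have "\<dots> \<le> (l * (norm ?w)\<^sup>2) * (l * (norm v)\<^sup>2)"
    by (intro mult_mono up psd) (use l in auto)
  also have "\<dots> = (l * norm ?w * norm v)\<^sup>2" by (rule sq_aux)
  finally have "((norm ?w)\<^sup>2)\<^sup>2 \<le> (l * norm ?w * norm v)\<^sup>2" by (simp only: eq)
  then show "norm ?w \<le> l * norm v" by (intro sq_aux2 l) auto
qed




lemma le_sq1: "(t::real) \<le> 1 + t\<^sup>2"
proof -
  have "0 \<le> (t - 1/2)\<^sup>2" by simp
  then show ?thesis by (simp add: power2_eq_square algebra_simps)
qed

lemma shift_bound: "(norm (y - p::real^'n))\<^sup>2 \<le> (2 + 2 * (norm p)\<^sup>2) * (1 + (norm y)\<^sup>2)"
proof -
  have "norm (y - p) \<le> norm y + norm p" by (rule norm_triangle_ineq4)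
  then have "(norm (y - p))\<^sup>2 \<le> (norm y + norm p)\<^sup>2" by (intro power_mono) auto
  also have "\<dots> \<le> 2 * (norm y)\<^sup>2 + 2 * (norm p)\<^sup>2"
  proof -
    have "0 \<le> (norm y - norm p)\<^sup>2" by simp
    then show ?thesis by (simp add: power2_eq_square algebra_simps)
  qed
  also have "\<dots> \<le> (2 + 2 * (norm p)\<^sup>2) * (1 + (norm y)\<^sup>2)"
    by (simp add: algebra_simps)
  finally show ?thesis .
qed

lemma norm_mat_le: "norm (M::real^'n^'m) \<le> (\<Sum>i\<in>UNIV. norm (M $ i))"
  by (simp add: norm_vec_def L2_set_le_sum)

lemma norm_outer_le: "norm (outer z z) \<le> real CARD('n) * (norm (z::real^'n))\<^sup>2"
proof -
  have row: "outer z z $ i = z $ i *\<^sub>R z" for i by (simp add: outer_def vec_eq_iff)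
  have "norm (outer z z) \<le> (\<Sum>i\<in>UNIV. norm (outer z z $ i))" by (rule norm_mat_le)
  also have "\<dots> \<le> (\<Sum>i\<in>(UNIV::'n set). (norm z)\<^sup>2)"
  proof (rule sum_mono)
    fix i
    have "norm (outer z z $ i) = \<bar>z $ i\<bar> * norm z" by (simp add: row)
    also have "\<dots> \<le> norm z * norm z" by (intro mult_right_mono component_le_norm_cart) auto
    finally show "norm (outer z z $ i) \<le> (norm z)\<^sup>2" by (simp add: power2_eq_square)
  qed
  also have "\<dots> = real CARD('n) * (norm z)\<^sup>2" by simp
  finally show ?thesis .
qed

lemma norm_Amat_le: "norm (Amat (z::real^'n)) \<le> (norm (mat 1 :: real^'n^'n) + real CARD('n)) * (norm z)\<^sup>2"
proof -
  have "norm (Amat z) \<le> norm ((norm z)\<^sup>2 *\<^sub>R (mat 1 :: real^'n^'n)) + norm (outer z z)"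
    unfolding Amat_def by (rule norm_triangle_ineq4)
  also have "\<dots> \<le> (norm z)\<^sup>2 * norm (mat 1 :: real^'n^'n) + real CARD('n) * (norm z)\<^sup>2"
    using norm_outer_le[of z] by simp
  finally show ?thesis by (simp add: algebra_simps)
qed

lemma cont_outer: "continuous_on UNIV (\<lambda>y::real^'n. outer (y - p) (y - p))"
  unfolding outer_def by (intro continuous_intros)

lemma cont_Amat: "continuous_on UNIV (\<lambda>y::real^'n. Amat (p - y))"
  unfolding Amat_def outer_def by (intro continuous_intros)

locale L23 = prob_space u for u :: "(real^'d) measure" +
  assumes S: "sets u = sets borel"
    and I: "integrable u (\<lambda>x. (norm x)\<^sup>2)"
begin

lemma sp: "space u = UNIV" using sets_eq_imp_space_eq[OF S] by simp

lemma meas: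
  fixes f :: "real^'d \<Rightarrow> 'b::topological_space"
  assumes "f \<in> borel_measurable borel" shows "f \<in> borel_measurable u"
  using assms measurable_cong_sets[OF S refl, where N="borel :: 'b measure"] by simp

lemma integrable_quad:
  fixes g :: "real^'d \<Rightarrow> 'b::{banach, second_countable_topology}"
  assumes "continuous_on UNIV g" "\<And>y. norm (g y) \<le> c * (1 + (norm y)\<^sup>2)"
  shows "integrable u g"
proof (rule Bochner_Integration.integrable_bound)
  show "integrable u (\<lambda>y. c * (1 + (norm y)\<^sup>2))" using I by auto
  show "g \<in> borel_measurable u" using assms(1) by (intro meas borel_measurable_continuous_onI)
  show "AE x in u. norm (g x) \<le> norm (c * (1 + (norm x)\<^sup>2))"
    using assms(2) by (auto intro: order_trans[OF _ abs_ge_self])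
qed

lemma int_id: "integrable u (\<lambda>y. y)"
  by (rule integrable_quad[where c=1]) (auto intro: continuous_intros le_sq1)

lemma int_sq: "integrable u (\<lambda>y. (norm (y - p))\<^sup>2)"
  by (rule integrable_quad[where c="2 + 2 * (norm p)\<^sup>2"]) (auto intro!: continuous_intros shift_bound)

lemma int_bil: "integrable u (\<lambda>y. (a \<bullet> (y - p)) * (b \<bullet> (y - p)))"
proof (rule integrable_quad[where c="norm a * norm b * (2 + 2 * (norm p)\<^sup>2)"])
  show "continuous_on UNIV (\<lambda>y. (a \<bullet> (y - p)) * (b \<bullet> (y - p)))" by (intro continuous_intros)
  fix y
  have "norm ((a \<bullet> (y - p)) * (b \<bullet> (y - p))) \<le> (norm a * norm (y-p)) * (norm b * norm (y - p))"
    unfolding norm_mult by (intro mult_mono) (auto simp: Cauchy_Schwarz_ineq2)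
  also have "\<dots> = norm a * norm b * (norm (y - p))\<^sup>2" by (simp add: power2_eq_square)
  also have "\<dots> \<le> norm a * norm b * ((2 + 2 * (norm p)\<^sup>2) * (1 + (norm y)\<^sup>2))"
    by (intro mult_left_mono shift_bound) auto
  finally show "norm ((a \<bullet> (y - p)) * (b \<bullet> (y - p))) \<le> norm a * norm b * (2 + 2 * (norm p)\<^sup>2) * (1 + (norm y)\<^sup>2)"
    by (simp add: mult_ac)
qed

lemma int_outer: "integrable u (\<lambda>y. outer (y - p) (y - p))"
proof (rule integrable_quad[where c="real CARD('d) * (2 + 2 * (norm p)\<^sup>2)"])
  show "continuous_on UNIV (\<lambda>y. outer (y - p) (y - p))" by (rule cont_outer)
  fix y
  have "norm (outer (y - p) (y - p)) \<le> real CARD('d) * (norm (y - p))\<^sup>2" by (rule norm_outer_le)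
  also have "\<dots> \<le> real CARD('d) * ((2 + 2 * (norm p)\<^sup>2) * (1 + (norm y)\<^sup>2))"
    by (intro mult_left_mono shift_bound) auto
  finally show "norm (outer (y - p) (y - p)) \<le> real CARD('d) * (2 + 2 * (norm p)\<^sup>2) * (1 + (norm y)\<^sup>2)"
    by (simp add: mult_ac)
qed

lemma int_Amat: "integrable u (\<lambda>y. Amat (p - y))"
proof (rule integrable_quad[where c="(norm (mat 1 :: real^'d^'d) + real CARD('d)) * (2 + 2 * (norm p)\<^sup>2)"])
  show "continuous_on UNIV (\<lambda>y. Amat (p - y))" by (rule cont_Amat)
  fix y
  have "norm (Amat (p - y)) \<le> (norm (mat 1 :: real^'d^'d) + real CARD('d)) * (norm (y - p))\<^sup>2"
    using norm_Amat_le[of "p - y"] by (simp add: norm_minus_commute)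
  also have "\<dots> \<le> (norm (mat 1 :: real^'d^'d) + real CARD('d)) * ((2 + 2 * (norm p)\<^sup>2) * (1 + (norm y)\<^sup>2))"
    by (intro mult_left_mono shift_bound) auto
  finally show "norm (Amat (p - y)) \<le> (norm (mat 1 :: real^'d^'d) + real CARD('d)) * (2 + 2 * (norm p)\<^sup>2) * (1 + (norm y)\<^sup>2)"
    by (simp add: mult_ac)
qed

lemma form_integral:
  fixes F :: "real^'d \<Rightarrow> real^'n^'n"
  assumes "integrable u F"
  shows "v \<bullet> ((\<integral>y. F y \<partial>u) *v w) = (\<integral>y. v \<bullet> (F y *v w) \<partial>u)"
  using integral_bounded_linear[OF bl_form assms] by simp

end



lemma diag_form: "axis i (1::real) \<bullet> (M *v axis i 1) = (M::real^'n^'n) $ i $ i"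
proof -
  have "(M *v axis i 1) $ i = M $ i $ i"
    by (simp add: matrix_vector_mult_def axis_def if_distrib[where f="\<lambda>x. _ * x"] sum.delta' cong: if_cong)
  then show ?thesis by (simp add: inner_axis')
qed

lemma trace_sum: "trace (M::real^'n^'n) = (\<Sum>i\<in>UNIV. axis i 1 \<bullet> (M *v axis i 1))"
  by (simp add: trace_def diag_form)

context L23 begin

lemma int_lin: "integrable u (\<lambda>y. a \<bullet> (y - p))"
  using int_id by (simp add: inner_diff_right)

lemma mean_zero: "(\<integral>y. a \<bullet> (y - mean u) \<partial>u) = 0"
proof -
  have ia: "integrable u (\<lambda>y. a \<bullet> y)" using int_id by auto
  have "(\<integral>y. a \<bullet> (y - mean u) \<partial>u) = (\<integral>y. a \<bullet> y \<partial>u) - (\<integral>y. a \<bullet> mean u \<partial>u)"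
    unfolding inner_diff_right by (rule Bochner_Integration.integral_diff[OF ia integrable_const])
  also have "\<dots> = 0" using int_id by (simp add: mean_def prob_space)
  finally show ?thesis .
qed

lemma cov_form: "v \<bullet> (cov u *v w) = (\<integral>y. (v \<bullet> (y - mean u)) * ((y - mean u) \<bullet> w) \<partial>u)"
  unfolding cov_def by (simp add: form_integral[OF int_outer] inner_outer)

lemma convA_form: "v \<bullet> (convA u x *v w) =
    (\<integral>y. (norm (x - y))\<^sup>2 * (v \<bullet> w) - (v \<bullet> (x - y)) * ((x - y) \<bullet> w) \<partial>u)"
  unfolding convA_def by (simp add: form_integral[OF int_Amat] inner_Amat)

lemma trace_cov: "trace (cov u) = (\<integral>y. (norm (y - mean u))\<^sup>2 \<partial>u)"
proof -
  have "trace (cov u) = (\<Sum>i\<in>UNIV. \<integral>y. (axis i 1 \<bullet> (y - mean u)) * ((y - mean u) \<bullet> axis i 1) \<partial>u)"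
    by (simp add: trace_sum cov_form)
  also have "\<dots> = (\<integral>y. (\<Sum>i\<in>UNIV. (axis i 1 \<bullet> (y - mean u)) * ((y - mean u) \<bullet> axis i 1)) \<partial>u)"
    using int_bil by (subst Bochner_Integration.integral_sum) (auto simp: inner_commute)
  also have "\<dots> = (\<integral>y. (norm (y - mean u))\<^sup>2 \<partial>u)"
    unfolding inner_axis inner_axis' by (simp add: power2_norm_eq_inner inner_vec_def)
  finally show ?thesis .
qed

lemma cov_sym: "v \<bullet> (cov u *v w) = w \<bullet> (cov u *v v)"
  unfolding cov_form by (simp add: inner_commute mult.commute)

lemma cov_psd: "0 \<le> v \<bullet> (cov u *v v)"
  unfolding cov_form by (intro integral_nonneg_AE) (simp add: inner_commute)

lemma convA_sym: "v \<bullet> (convA u x *v w) = w \<bullet> (convA u x *v v)"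
  unfolding convA_form by (simp add: inner_commute mult.commute)

lemma convA_psd: "0 \<le> v \<bullet> (convA u x *v v)"
proof -
  have "(v \<bullet> (x - y)) * ((x - y) \<bullet> v) \<le> (norm (x - y))\<^sup>2 * (v \<bullet> v)" for y
  proof -
    have e1: "(v \<bullet> (x - y)) * ((x - y) \<bullet> v) = (v \<bullet> (x - y))\<^sup>2"
      by (simp add: inner_commute power2_eq_square)
    have e2: "(norm (x - y))\<^sup>2 * (v \<bullet> v) = (v \<bullet> v) * ((x - y) \<bullet> (x - y))"
      by (simp add: power2_norm_eq_inner mult.commute)
    show ?thesis unfolding e1 e2 by (rule Cauchy_Schwarz_ineq)
  qed
  then show ?thesis
    unfolding convA_form by (intro integral_nonneg_AE) auto
qed

lemma int_xy: "(\<integral>y. (norm (x - y))\<^sup>2 \<partial>u) \<le> (\<integral>y. (norm y)\<^sup>2 \<partial>u) + (norm (x - mean u))\<^sup>2"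
proof -
  have pt: "(norm (x - y))\<^sup>2 = ((norm x)\<^sup>2 + (norm y)\<^sup>2) - 2 * (x \<bullet> y)" for y
    by (simp add: power2_norm_eq_inner inner_diff_left inner_diff_right inner_commute)
  have iy: "integrable u (\<lambda>y. x \<bullet> y)" using int_id by simp
  have "(\<integral>y. (norm (x - y))\<^sup>2 \<partial>u) = (\<integral>y. ((norm x)\<^sup>2 + (norm y)\<^sup>2) - 2 * (x \<bullet> y) \<partial>u)"
    by (simp only: pt)
  also have "\<dots> = (\<integral>y. (norm x)\<^sup>2 + (norm y)\<^sup>2 \<partial>u) - (\<integral>y. 2 * (x \<bullet> y) \<partial>u)"
    using I iy by (intro Bochner_Integration.integral_diff) auto
  also have "\<dots> = (norm x)\<^sup>2 + (\<integral>y. (norm y)\<^sup>2 \<partial>u) - 2 * (x \<bullet> mean u)"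
    using I iy int_id by (simp add: Bochner_Integration.integral_add prob_space mean_def)
  also have "\<dots> \<le> (\<integral>y. (norm y)\<^sup>2 \<partial>u) + (norm (x - mean u))\<^sup>2"
    by (simp add: power2_norm_eq_inner inner_diff_left inner_diff_right inner_commute)
  finally show ?thesis .
qed

lemma convA_up: "v \<bullet> (convA u x *v v) \<le> (\<integral>y. (norm (x - y))\<^sup>2 \<partial>u) * (norm v)\<^sup>2"
proof -
  have "v \<bullet> (convA u x *v v) \<le> (\<integral>y. (norm (x - y))\<^sup>2 * (norm v)\<^sup>2 \<partial>u)"
    unfolding convA_form
  proof (rule Bochner_Integration.integral_mono)
    show "integrable u (\<lambda>y. (norm (x - y))\<^sup>2 * (v \<bullet> v) - (v \<bullet> (x - y)) * ((x - y) \<bullet> v))"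
    proof -
      have eq: "(\<lambda>y. (norm (x - y))\<^sup>2 * (v \<bullet> v) - (v \<bullet> (x - y)) * ((x - y) \<bullet> v)) =
          (\<lambda>y. (norm (y - x))\<^sup>2 * (v \<bullet> v) - (v \<bullet> (y - x)) * (v \<bullet> (y - x)))"
      proof
        fix y
        have "x - y = - (y - x)" by simp
        then show "(norm (x - y))\<^sup>2 * (v \<bullet> v) - (v \<bullet> (x - y)) * ((x - y) \<bullet> v) =
          (norm (y - x))\<^sup>2 * (v \<bullet> v) - (v \<bullet> (y - x)) * (v \<bullet> (y - x))"
          by (simp only: norm_minus_cancel inner_minus_right inner_minus_left inner_commute[of "y - x" v])
      qed
      show ?thesis unfolding eq
        using int_sq[of x] int_bil[of v x v]
        by (intro Bochner_Integration.integrable_diff Bochner_Integration.integrable_mult_left)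
    qed
    show "integrable u (\<lambda>y. (norm (x - y))\<^sup>2 * (norm v)\<^sup>2)"
      using int_sq[of x] by (auto simp: norm_minus_commute)
    fix y
    show "(norm (x - y))\<^sup>2 * (v \<bullet> v) - (v \<bullet> (x - y)) * ((x - y) \<bullet> v) \<le> (norm (x - y))\<^sup>2 * (norm v)\<^sup>2"
      by (simp add: power2_norm_eq_inner inner_commute)
  qed
  also have "\<dots> = (\<integral>y. (norm (x - y))\<^sup>2 \<partial>u) * (norm v)\<^sup>2" by simp
  finally show ?thesis .
qed

end



lemma pt_expand:
  fixes w z e :: "real^'n"
  assumes "e \<bullet> e = 1"
  shows "(norm (w - z))\<^sup>2 * (e \<bullet> e) - (e \<bullet> (w - z)) * ((w - z) \<bullet> e) =
    (((norm z)\<^sup>2 - (e \<bullet> z) * (e \<bullet> z)) + ((norm w)\<^sup>2 - (e \<bullet> w)\<^sup>2)) + ((-2) * (w \<bullet> z) + (2 * (e \<bullet> w)) * (e \<bullet> z))"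
  using assms unfolding power2_norm_eq_inner
  by (simp add: inner_diff_left inner_diff_right inner_commute power2_eq_square algebra_simps)

context L23 begin

lemma cov_form': "v \<bullet> (cov u *v v) = (\<integral>y. (v \<bullet> (y - mean u)) * (v \<bullet> (y - mean u)) \<partial>u)"
  unfolding cov_form by (simp add: inner_commute)

lemma convA_lower:
  fixes e :: "real^'d"
  assumes e: "norm e = 1"
  shows "trace (cov u) - norm2 (cov u) \<le> norm2 (convA u x)"
proof -
  define V where "V = mean u"
  define w where "w = x - V"
  have ee: "e \<bullet> e = 1" using e by (simp add: norm_eq_1)
  define f1 where "f1 = (\<lambda>y. (norm (y - V))\<^sup>2 - (e \<bullet> (y - V)) * (e \<bullet> (y - V)))"
  define g where "g = (\<lambda>y. (-2) * (w \<bullet> (y - V)) + (2 * (e \<bullet> w)) * (e \<bullet> (y - V)))"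
  define c0 where "c0 = (norm w)\<^sup>2 - (e \<bullet> w)\<^sup>2"
  have xy: "x - y = w - (y - V)" for y by (simp add: w_def)
  have pt: "(norm (x - y))\<^sup>2 * (e \<bullet> e) - (e \<bullet> (x - y)) * ((x - y) \<bullet> e) = (f1 y + c0) + g y" for y
    unfolding xy f1_def g_def c0_def by (rule pt_expand[OF ee])
  have if1: "integrable u f1" unfolding f1_def using int_sq int_bil
    by (intro Bochner_Integration.integrable_diff)
  have ig: "integrable u g" unfolding g_def using int_lin
    by (intro Bochner_Integration.integrable_add Bochner_Integration.integrable_mult_right)
  have intf1: "(\<integral>y. f1 y \<partial>u) = trace (cov u) - e \<bullet> (cov u *v e)"
    unfolding f1_def trace_cov cov_form' V_def using int_sq int_bil
    by (intro Bochner_Integration.integral_diff)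
  have intg: "(\<integral>y. g y \<partial>u) = 0"
  proof -
    have "(\<integral>y. g y \<partial>u) = (\<integral>y. (-2) * (w \<bullet> (y - V)) \<partial>u) + (\<integral>y. (2 * (e \<bullet> w)) * (e \<bullet> (y - V)) \<partial>u)"
      unfolding g_def using int_lin
      by (intro Bochner_Integration.integral_add Bochner_Integration.integrable_mult_right)
    also have "\<dots> = 0" unfolding V_def by (simp add: mean_zero)
    finally show ?thesis .
  qed
  have "e \<bullet> (convA u x *v e) = (\<integral>y. (f1 y + c0) + g y \<partial>u)"
    unfolding convA_form pt ..
  also have "\<dots> = (\<integral>y. f1 y + c0 \<partial>u) + (\<integral>y. g y \<partial>u)"
    using if1 ig by (intro Bochner_Integration.integral_add Bochner_Integration.integrable_add) auto
  also have "\<dots> = (\<integral>y. f1 y \<partial>u) + c0"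
    using if1 intg by (simp add: Bochner_Integration.integral_add prob_space)
  finally have eq: "e \<bullet> (convA u x *v e) = trace (cov u) - e \<bullet> (cov u *v e) + c0"
    using intf1 by simp
  have "c0 \<ge> 0"
  proof -
    have "(e \<bullet> w)\<^sup>2 \<le> (e \<bullet> e) * (w \<bullet> w)" by (rule Cauchy_Schwarz_ineq)
    then show ?thesis unfolding c0_def using ee by (simp add: power2_norm_eq_inner)
  qed
  moreover have "e \<bullet> (cov u *v e) \<le> norm2 (cov u)" by (rule onorm_lower[OF e])
  moreover have "e \<bullet> (convA u x *v e) \<le> norm2 (convA u x)" by (rule onorm_lower[OF e])
  ultimately show ?thesis using eq by linarith
qed

lemma convA_upper: "norm2 (convA u x) \<le> (\<integral>y. (norm y)\<^sup>2 \<partial>u) + (norm (x - mean u))\<^sup>2"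
proof -
  have "norm2 (convA u x) \<le> (\<integral>y. (norm (x - y))\<^sup>2 \<partial>u)"
    by (rule onorm_upper[OF convA_sym convA_psd convA_up]) (auto intro: integral_nonneg_AE)
  also note int_xy
  finally show ?thesis .
qed

end



lemma proj_expand:
  fixes z v :: "real^'n"
  assumes "v \<bullet> v = 1"
  shows "(norm (z - (v \<bullet> z) *\<^sub>R v))\<^sup>2 = (norm z)\<^sup>2 - (v \<bullet> z) * (v \<bullet> z)"
  using assms unfolding power2_norm_eq_inner
  by (simp add: inner_diff_left inner_diff_right inner_commute algebra_simps)

context L23 begin

lemma cov_pos:
  assumes nl: "\<not> concentrated_on_line u"
  shows "norm2 (cov u) < trace (cov u)"
proof -
  define V where "V = mean u"
  define Q where "Q = (\<lambda>v::real^'d. v \<bullet> (cov u *v v))"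
  have contQ: "continuous_on (sphere 0 1) Q"
    unfolding Q_def
    by (intro continuous_on_inner continuous_on_id linear_continuous_on matrix_vector_mul_bounded_linear)
  have ne: "sphere (0::real^'d) 1 \<noteq> {}"
  proof -
    have "axis undefined (1::real) \<in> sphere (0::real^'d) 1" by (simp add: sphere_def dist_norm)
    then show ?thesis by blast
  qed
  obtain v0 where v0: "v0 \<in> sphere 0 1" and max: "\<And>v. v \<in> sphere 0 1 \<Longrightarrow> Q v \<le> Q v0"
    using continuous_attains_sup[OF compact_sphere ne contQ] by blast
  have nv0: "norm v0 = 1" using v0 by (simp add: sphere_def dist_norm)
  have v0v0: "v0 \<bullet> v0 = 1" using nv0 by (simp add: norm_eq_1)
  have Qscale: "Q (c *\<^sub>R v) = c\<^sup>2 * Q v" for c v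
    by (simp add: Q_def matrix_vector_mult_scaleR power2_eq_square)
  have Qle: "Q v \<le> Q v0 * (norm v)\<^sup>2" for v
  proof (cases "v = 0")
    case True then show ?thesis by (simp add: Q_def)
  next
    case False
    define v' where "v' = (1 / norm v) *\<^sub>R v"
    have "norm v' = 1" using False by (simp add: v'_def)
    then have "Q v' \<le> Q v0" using max by (simp add: sphere_def dist_norm)
    have "v = norm v *\<^sub>R v'" using False by (simp add: v'_def)
    then have "Q v = (norm v)\<^sup>2 * Q v'" using Qscale by metis
    moreover have "(norm v)\<^sup>2 * Q v' \<le> (norm v)\<^sup>2 * Q v0"
      using \<open>Q v' \<le> Q v0\<close> by (intro mult_left_mono) auto
    ultimately show ?thesis by (simp add: mult.commute)
  qed
  have Q0: "0 \<le> Q v0" unfolding Q_def by (rule cov_psd)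
  have n2: "norm2 (cov u) \<le> Q v0"
    by (rule onorm_upper[OF cov_sym cov_psd _ Q0]) (use Qle in \<open>simp add: Q_def\<close>)
  define h where "h = (\<lambda>y. (norm ((y - V) - (v0 \<bullet> (y - V)) *\<^sub>R v0))\<^sup>2)"
  have h_eq: "h = (\<lambda>y. (norm (y - V))\<^sup>2 - (v0 \<bullet> (y - V)) * (v0 \<bullet> (y - V)))"
    unfolding h_def using proj_expand[OF v0v0] by simp
  have ih: "integrable u h" unfolding h_eq using int_sq int_bil
    by (intro Bochner_Integration.integrable_diff)
  have Th: "trace (cov u) - Q v0 = (\<integral>y. h y \<partial>u)"
    unfolding h_eq trace_cov Q_def cov_form' V_def using int_sq int_bil
    by (intro Bochner_Integration.integral_diff[symmetric])
  have "0 < (\<integral>y. h y \<partial>u)"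
  proof (rule ccontr)
    assume "\<not> 0 < (\<integral>y. h y \<partial>u)"
    moreover have "0 \<le> (\<integral>y. h y \<partial>u)" unfolding h_def by (intro integral_nonneg_AE) auto
    ultimately have "(\<integral>y. h y \<partial>u) = 0" by simp
    then have ae: "AE y in u. h y = 0"
      using integral_nonneg_eq_0_iff_AE[OF ih] unfolding h_def by auto
    define L where "L = range (\<lambda>t::real. V + t *\<^sub>R v0)"
    have L_eq: "L = {y. y - V - (v0 \<bullet> (y - V)) *\<^sub>R v0 = 0}"
    proof
      show "L \<subseteq> {y. y - V - (v0 \<bullet> (y - V)) *\<^sub>R v0 = 0}"
        unfolding L_def using v0v0 by auto
      show "{y. y - V - (v0 \<bullet> (y - V)) *\<^sub>R v0 = 0} \<subseteq> L"
      proof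
        fix y assume "y \<in> {y. y - V - (v0 \<bullet> (y - V)) *\<^sub>R v0 = 0}"
        then have "y = V + (v0 \<bullet> (y - V)) *\<^sub>R v0" by (simp add: algebra_simps)
        then show "y \<in> L" unfolding L_def by blast
      qed
    qed
    have "closed L" unfolding L_eq
      by (intro closed_Collect_eq continuous_intros)
    then have Ls: "L \<in> sets u" using S by (simp add: borel_closed)
    have "AE y in u. y \<in> L"
      using ae by eventually_elim (simp add: h_def L_eq)
    then have "prob L = 1" using prob_eq_1[OF Ls] by simp
    then have "concentrated_on_line u" unfolding concentrated_on_line_def L_def by blast
    then show False using nl by simp
  qed
  then show ?thesis using Th n2 by linarith
qed

end


theorem lemma2p3:
  fixes u :: "(real^'d) measure"
  assumes "prob_space u"
    and "sets u = sets borel"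
    and "integrable u (\<lambda>x. (norm x)\<^sup>2)"
    and "\<not> concentrated_on_line u"
  shows "0 < trace (cov u) - norm2 (cov u) \<and>
         (\<forall>x. trace (cov u) - norm2 (cov u) \<le> norm2 (convA u x) \<and>
              norm2 (convA u x) \<le> (\<integral>y. (norm y)\<^sup>2 \<partial>u) + (norm (x - mean u))\<^sup>2)"
proof -
  interpret L23 u
    using assms(1-3) by (simp add: L23_def L23_axioms_def)
  have e: "norm (axis undefined (1::real) :: real^'d) = 1" by simp
  show ?thesis
    using cov_pos[OF assms(4)] convA_lower[OF e] convA_upper by auto
qed

end
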